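(* Let $X$ be a nonempty set. The monoid $FT^1(X)$ is an idempotent generated regular monoid. Moreover, if $u=g_0g_1\cdots g_n\in\Gamma(X)^+$ (with $g_j\in\Gamma(X)$) is such that there exists $k$ with $0<k<n$, $g_{j-1}\in\{g_j^l,g_j^r\}$ for all $1\le j\le k$, and $g_j\in\{g_{j-1}^l,g_{j-1}^r\}$ for all $k<j\le n$, then $[g_ng_{n-1}\cdots g_0]$ is an inverse of $[u]$ in $FT^1(X)$.
   Context: Let $1$ be a symbol not in $X$. Elements of height $\ge 2$ are triples $g=(g^l,g^c,g^r)$; $\Gamma_0(X)=\{1\}$, $\Gamma_1(X)=X$, each $x\in X$ identified with the triple $(1,x,1)$ (so $x^l=x^r=1$); for $i\ge 2$, $\Gamma_i(X)$ is the set of triples $g\in\Gamma_{i-1}(X)\times\Gamma_{i-2}(X)\times\Gamma_{i-1}(X)$ with $g^l\neq g^r$ and $g^c\in\{(g^l)^l,(g^l)^r\}\cap\{(g^r)^l,(g^r)^r\}$; $\Gamma(X)=\bigcup_{i\ge0}\Gamma_i(X)$. Let $\rho$ be the smallest congruence on $\Gamma(X)^+$ containing $(1g,g),(g1,g),(gg,g)$ for all $g\in\Gamma(X)$ and $(g^cg^lg,g)$, $(gg^rg^c,g)$, $(g^rg^cgg^cg^l,g^rg^cg^l)$ for all $g\in\Gamma_i(X)$, $i\ge2$. $FT^1(X)=\Gamma(X)^+/\rho$ and $[u]$ is the class of $u$. An inverse of $a$ is $b$ with $aba=a$, $bab=b$. *)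

theory Defs
  imports "HOL-Algebra.Group"
begin

text \<open>Elements of Gamma(X): the symbol 1, the letters x (identified with (1,x,1)),
  and triples (g^l, g^c, g^r).\<close>
datatype 'a gam = GOne | GX 'a | GT "'a gam" "'a gam" "'a gam"

fun gl :: "'a gam \<Rightarrow> 'a gam" where
  "gl (GT a c b) = a" | "gl (GX x) = GOne" | "gl GOne = GOne"
fun gr :: "'a gam \<Rightarrow> 'a gam" where
  "gr (GT a c b) = b" | "gr (GX x) = GOne" | "gr GOne = GOne"
fun gc :: "'a gam \<Rightarrow> 'a gam" where
  "gc (GT a c b) = c" | "gc (GX x) = GX x" | "gc GOne = GOne"

inductive Gamma_i :: "'a set \<Rightarrow> nat \<Rightarrow> 'a gam \<Rightarrow> bool" for X where
  g0: "Gamma_i X 0 GOne"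
| g1: "x \<in> X \<Longrightarrow> Gamma_i X 1 (GX x)"
| gT: "\<lbrakk> Gamma_i X (Suc i) a; Gamma_i X i c; Gamma_i X (Suc i) b; a \<noteq> b;
        c \<in> {gl a, gr a} \<inter> {gl b, gr b} \<rbrakk> \<Longrightarrow> Gamma_i X (Suc (Suc i)) (GT a c b)"

definition Gamma :: "'a set \<Rightarrow> 'a gam set" where
  "Gamma X = {g. \<exists>i. Gamma_i X i g}"

definition words :: "'a set \<Rightarrow> 'a gam list set" where
  "words X = {u. u \<noteq> [] \<and> set u \<subseteq> Gamma X}"

inductive rho :: "'a set \<Rightarrow> 'a gam list \<Rightarrow> 'a gam list \<Rightarrow> bool" for X where
  gen1: "g \<in> Gamma X \<Longrightarrow> rho X [GOne, g] [g]"
| gen2: "g \<in> Gamma X \<Longrightarrow> rho X [g, GOne] [g]"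
| gen3: "g \<in> Gamma X \<Longrightarrow> rho X [g, g] [g]"
| gen4: "Gamma_i X i g \<Longrightarrow> 2 \<le> i \<Longrightarrow> rho X [gc g, gl g, g] [g]"
| gen5: "Gamma_i X i g \<Longrightarrow> 2 \<le> i \<Longrightarrow> rho X [g, gr g, gc g] [g]"
| gen6: "Gamma_i X i g \<Longrightarrow> 2 \<le> i \<Longrightarrow>
           rho X [gr g, gc g, g, gc g, gl g] [gr g, gc g, gl g]"
| refl: "u \<in> words X \<Longrightarrow> rho X u u"
| sym: "rho X u v \<Longrightarrow> rho X v u"
| trans: "rho X u v \<Longrightarrow> rho X v w \<Longrightarrow> rho X u w"
| ctx: "rho X u v \<Longrightarrow> set p \<subseteq> Gamma X \<Longrightarrow> set q \<subseteq> Gamma X \<Longrightarrow>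
           rho X (p @ u @ q) (p @ v @ q)"

definition rho_class :: "'a set \<Rightarrow> 'a gam list \<Rightarrow> 'a gam list set" where
  "rho_class X u = {v. rho X u v}"

definition FT1 :: "'a set \<Rightarrow> 'a gam list set monoid" where
  "FT1 X = \<lparr> carrier = rho_class X ` words X,
             mult = (\<lambda>A B. {w. \<exists>u\<in>A. \<exists>v\<in>B. rho X (u @ v) w}),
             one = rho_class X [GOne] \<rparr>"

definition idempotent_generated :: "('b, 'c) monoid_scheme \<Rightarrow> bool" where
  "idempotent_generated M \<longleftrightarrow>
     (\<forall>a \<in> carrier M. \<exists>es. set es \<subseteq> {e \<in> carrier M. e \<otimes>\<^bsub>M\<^esub> e = e} \<and>
        a = foldr (\<lambda>e acc. e \<otimes>\<^bsub>M\<^esub> acc) es \<one>\<^bsub>M\<^esub>)"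

definition regular_monoid :: "('b, 'c) monoid_scheme \<Rightarrow> bool" where
  "regular_monoid M \<longleftrightarrow> monoid M \<and>
     (\<forall>a \<in> carrier M. \<exists>b \<in> carrier M. a \<otimes>\<^bsub>M\<^esub> b \<otimes>\<^bsub>M\<^esub> a = a)"

definition is_inverse :: "('b, 'c) monoid_scheme \<Rightarrow> 'b \<Rightarrow> 'b \<Rightarrow> bool" where
  "is_inverse M a b \<longleftrightarrow> a \<otimes>\<^bsub>M\<^esub> b \<otimes>\<^bsub>M\<^esub> a = a \<and> b \<otimes>\<^bsub>M\<^esub> a \<otimes>\<^bsub>M\<^esub> b = b"

end

theory Submission
  imports Defs
begin

definition ch :: "'a gam \<Rightarrow> 'a gam \<Rightarrow> bool" where
  "ch a b \<longleftrightarrow> b \<noteq> GOne \<and> (a = gl b \<or> a = gr b)"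

fun upc :: "'a gam list \<Rightarrow> bool" where
  "upc [] = True"
| "upc [a] = True"
| "upc (a # b # xs) = (ch a b \<and> upc (b # xs))"

lemma upc_append: "upc (xs @ y # ys) \<longleftrightarrow> upc (xs @ [y]) \<and> upc (y # ys)"
proof (induction xs rule: upc.induct)
  case 1 then show ?case by simp
next
  case (2 a) then show ?case by simp
next
  case (3 a b xs) then show ?case by simp
qed

lemma upc_nth: "upc xs \<longleftrightarrow> (\<forall>j. 0 < j \<and> j < length xs \<longrightarrow> ch (xs ! (j - 1)) (xs ! j))"
proof (induction xs rule: upc.induct)
  case 1 then show ?case by simp
next
  case (2 a) then show ?case by simp
next
  case (3 a b xs)
  show ?case
  proof
    assume h: "upc (a # b # xs)"
    show "\<forall>j. 0 < j \<and> j < length (a # b # xs) \<longrightarrow> ch ((a # b # xs) ! (j - 1)) ((a # b # xs) ! j)"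
    proof (intro allI impI)
      fix j assume j: "0 < j \<and> j < length (a # b # xs)"
      show "ch ((a # b # xs) ! (j - 1)) ((a # b # xs) ! j)"
      proof (cases "j = 1")
        case True then show ?thesis using h by simp
      next
        case False
        then have jj: "0 < j - 1 \<and> j - 1 < length (b # xs)" using j by auto
        have "\<forall>j. 0 < j \<and> j < length (b # xs) \<longrightarrow> ch ((b # xs) ! (j - 1)) ((b # xs) ! j)"
          using h 3 by simp
        then have "ch ((b # xs) ! (j - 1 - 1)) ((b # xs) ! (j - 1))" using jj by blast
        moreover have "(a # b # xs) ! (j - 1) = (b # xs) ! (j - 1 - 1)" using False j by (cases j) auto
        moreover have "(a # b # xs) ! j = (b # xs) ! (j - 1)" using False j by (cases j) auto
        ultimately show ?thesis by simp
      qed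
    qed
  next
    assume h: "\<forall>j. 0 < j \<and> j < length (a # b # xs) \<longrightarrow> ch ((a # b # xs) ! (j - 1)) ((a # b # xs) ! j)"
    have "ch a b" using h[rule_format, of 1] by simp
    moreover have "\<forall>j. 0 < j \<and> j < length (b # xs) \<longrightarrow> ch ((b # xs) ! (j - 1)) ((b # xs) ! j)"
    proof (intro allI impI)
      fix j assume j: "0 < j \<and> j < length (b # xs)"
      then have "ch ((a # b # xs) ! (Suc j - 1)) ((a # b # xs) ! Suc j)" using h[rule_format, of "Suc j"] by simp
      then show "ch ((b # xs) ! (j - 1)) ((b # xs) ! j)" using j by (cases j) auto
    qed
    ultimately show "upc (a # b # xs)" using 3 by simp
  qed
qed

lemma Gi_unique: "Gamma_i X i g \<Longrightarrow> Gamma_i X j g \<Longrightarrow> i = j"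
proof (induction arbitrary: j rule: Gamma_i.induct)
  case g0 from g0.prems show ?case by (cases rule: Gamma_i.cases) auto
next
  case (g1 x) from g1.prems show ?case by (cases rule: Gamma_i.cases) auto
next
  case (gT i a c b)
  from gT.prems show ?case by (cases rule: Gamma_i.cases) (auto dest: gT.IH(1))
qed

lemma GOne_Gamma: "GOne \<in> Gamma X"
  unfolding Gamma_def by (auto intro: Gamma_i.g0)

lemma Gi_Gamma: "Gamma_i X i g \<Longrightarrow> g \<in> Gamma X"
  unfolding Gamma_def by auto

lemma Gamma_children: "g \<in> Gamma X \<Longrightarrow> gl g \<in> Gamma X \<and> gr g \<in> Gamma X \<and> gc g \<in> Gamma X"
proof -
  assume "g \<in> Gamma X"
  then obtain i where "Gamma_i X i g" unfolding Gamma_def by auto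
  then show ?thesis
    by (cases rule: Gamma_i.cases) (auto simp: GOne_Gamma intro: Gi_Gamma Gamma_i.intros)
qed

lemma ch_Gamma: "ch a b \<Longrightarrow> b \<in> Gamma X \<Longrightarrow> a \<in> Gamma X"
  unfolding ch_def using Gamma_children by blast

lemma Gi_Suc_not_one: "Gamma_i X (Suc i) a \<Longrightarrow> a \<noteq> GOne"
  using Gi_unique[OF _ Gamma_i.g0] by blast

lemma ch_level: "ch m a \<Longrightarrow> Gamma_i X i m \<Longrightarrow> a \<in> Gamma X \<Longrightarrow> Gamma_i X (Suc i) a"
proof -
  assume c: "ch m a" and m: "Gamma_i X i m" and "a \<in> Gamma X"
  then obtain j where "Gamma_i X j a" unfolding Gamma_def by auto
  then show ?thesis
  proof (cases rule: Gamma_i.cases)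
    case g0 then show ?thesis using c by (simp add: ch_def)
  next
    case (g1 x)
    then have "m = GOne" using c by (simp add: ch_def)
    then have "Gamma_i X i GOne" using m by simp
    then have "i = 0" using Gi_unique[OF _ Gamma_i.g0] by blast
    then show ?thesis using g1 \<open>Gamma_i X j a\<close> by simp
  next
    case (gT i' a' c' b')
    then have "m = a' \<or> m = b'" using c by (auto simp: ch_def)
    then have "i = Suc i'" using gT Gi_unique[OF m] by blast
    then show ?thesis using gT \<open>Gamma_i X j a\<close> by simp
  qed
qed

lemma rho_words: "rho X u v \<Longrightarrow> u \<in> words X \<and> v \<in> words X"
proof (induction rule: rho.induct)
  case (gen4 i g)
  have "g \<in> Gamma X" by (rule Gi_Gamma[OF gen4(1)])
  then show ?case using Gamma_children[of g X] by (auto simp: words_def)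
next
  case (gen5 i g)
  have "g \<in> Gamma X" by (rule Gi_Gamma[OF gen5(1)])
  then show ?case using Gamma_children[of g X] by (auto simp: words_def)
next
  case (gen6 i g)
  have "g \<in> Gamma X" by (rule Gi_Gamma[OF gen6(1)])
  then show ?case using Gamma_children[of g X] by (auto simp: words_def)
qed (auto simp: words_def GOne_Gamma)

lemma words_set: "u \<in> words X \<Longrightarrow> set u \<subseteq> Gamma X"
  by (simp add: words_def)

lemma rho_app: "rho X u u' \<Longrightarrow> rho X v v' \<Longrightarrow> rho X (u @ v) (u' @ v')"
proof -
  assume a: "rho X u u'" and b: "rho X v v'"
  have w: "u \<in> words X" "u' \<in> words X" "v \<in> words X" "v' \<in> words X"
    using rho_words[OF a] rho_words[OF b] by auto
  have "rho X ([] @ u @ v) ([] @ u' @ v)"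
    by (rule rho.ctx[OF a]) (use w in \<open>auto simp: words_def\<close>)
  moreover have "rho X (u' @ v @ []) (u' @ v' @ [])"
    by (rule rho.ctx[OF b]) (use w in \<open>auto simp: words_def\<close>)
  ultimately show ?thesis by (auto intro: rho.trans)
qed

lemma rho_refl: "u \<noteq> [] \<Longrightarrow> set u \<subseteq> Gamma X \<Longrightarrow> rho X u u"
  by (rule rho.refl) (simp add: words_def)

lemma rho_ctx: "rho X u v \<Longrightarrow> set p \<subseteq> Gamma X \<Longrightarrow> set q \<subseteq> Gamma X \<Longrightarrow>
   u' = p @ u @ q \<Longrightarrow> v' = p @ v @ q \<Longrightarrow> rho X u' v'"
  using rho.ctx by blast

inductive_cases GTE: "Gamma_i X n (GT a c b)"

lemma GT_facts:
  assumes "Gamma_i X n (GT a c b)"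
  shows "2 \<le> n" "a \<in> Gamma X" "b \<in> Gamma X" "c \<in> Gamma X" "GT a c b \<in> Gamma X"
  using assms Gi_Gamma[OF assms] by (auto elim!: GTE intro: Gi_Gamma)

lemma D1:
  assumes g: "Gamma_i X n (GT a c b)"
  shows "rho X [c, GT a c b] [GT a c b]"
proof -
  note f = GT_facts[OF g]
  have s4: "rho X [c, a, GT a c b] [GT a c b]" using rho.gen4[OF g f(1)] by simp
  have h1: "rho X [c, c, a, GT a c b] [c, GT a c b]"
    by (rule rho_ctx[OF s4, where p="[c]" and q="[]"]) (use f in auto)
  have h2: "rho X [c, c, a, GT a c b] [c, a, GT a c b]"
    by (rule rho_ctx[OF rho.gen3[of c], where p="[]" and q="[a, GT a c b]"]) (use f in auto)
  show ?thesis using h1 h2 s4 by (meson rho.sym rho.trans)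
qed

lemma D2:
  assumes g: "Gamma_i X n (GT a c b)"
  shows "rho X [GT a c b, c] [GT a c b]"
proof -
  note f = GT_facts[OF g]
  have s5: "rho X [GT a c b, b, c] [GT a c b]" using rho.gen5[OF g f(1)] by simp
  have h1: "rho X [GT a c b, b, c, c] [GT a c b, c]"
    by (rule rho_ctx[OF s5, where p="[]" and q="[c]"]) (use f in auto)
  have h2: "rho X [GT a c b, b, c, c] [GT a c b, b, c]"
    by (rule rho_ctx[OF rho.gen3[of c], where p="[GT a c b, b]" and q="[]"]) (use f in auto)
  show ?thesis using h1 h2 s5 by (meson rho.sym rho.trans)
qed

lemma M2:
  assumes g: "Gamma_i X n (GT l c r)"
  shows "rho X [r, c, l] [r, GT l c r, l]"
proof -
  note f = GT_facts[OF g]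
  have s6: "rho X [r, c, GT l c r, c, l] [r, c, l]" using rho.gen6[OF g f(1)] by simp
  have h1: "rho X [r, c, GT l c r, c, l] [r, GT l c r, c, l]"
    by (rule rho_ctx[OF D1[OF g], where p="[r]" and q="[c, l]"]) (use f in auto)
  have h2: "rho X [r, GT l c r, c, l] [r, GT l c r, l]"
    by (rule rho_ctx[OF D2[OF g], where p="[r]" and q="[l]"]) (use f in auto)
  show ?thesis using h1 h2 s6 by (meson rho.sym rho.trans)
qed

lemma M3:
  assumes g: "g \<in> Gamma X" and h: "ch h g"
  shows "rho X [g, h, g] [g]"
proof -
  obtain i where gi: "Gamma_i X i g" using g unfolding Gamma_def by auto
  then show ?thesis
  proof (cases rule: Gamma_i.cases)
    case g0 then show ?thesis using h by (simp add: ch_def)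
  next
    case (g1 x)
    then have hh: "h = GOne" using h by (simp add: ch_def)
    have a: "rho X [g, GOne, g] [g, g]"
      by (rule rho_ctx[OF rho.gen2[OF g], where p="[]" and q="[g]"]) (use g in auto)
    show ?thesis using a rho.gen3[OF g] hh by (meson rho.trans)
  next
    case (gT j a c b)
    have geq: "g = GT a c b" using gT by simp
    have gi': "Gamma_i X i (GT a c b)" using gi geq by simp
    note f = GT_facts[OF gi']
    have "h = a \<or> h = b" using h gT by (auto simp: ch_def)
    then show ?thesis
    proof
      assume ha: "h = a"
      have h1: "rho X [g, c, a, g] [g, a, g]"
        by (rule rho_ctx[OF D2[OF gi'], where p="[]" and q="[a, g]"]) (use f geq in auto)
      have h2: "rho X [g, c, a, g] [g, g]"
        using rho_ctx[OF rho.gen4[OF gi' f(1)], where p="[g]" and q="[]"] f geq by auto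
      show ?thesis using h1 h2 rho.gen3[OF g] ha by (meson rho.sym rho.trans)
    next
      assume hb: "h = b"
      have h1: "rho X [g, b, c, g] [g, b, g]"
        by (rule rho_ctx[OF D1[OF gi'], where p="[g, b]" and q="[]"]) (use f geq in auto)
      have h2: "rho X [g, b, c, g] [g, g]"
        using rho_ctx[OF rho.gen5[OF gi' f(1)], where p="[]" and q="[g]"] f geq by auto
      show ?thesis using h1 h2 rho.gen3[OF g] hb by (meson rho.sym rho.trans)
    qed
  qed
qed

lemma upc_glue: "upc (xs @ [y]) \<Longrightarrow> upc zs \<Longrightarrow> zs \<noteq> [] \<Longrightarrow> hd zs = y \<Longrightarrow> upc (xs @ zs)"
  by (metis list.collapse upc_append)

lemma hd_glue: "zs \<noteq> [] \<Longrightarrow> hd zs = y \<Longrightarrow> hd (xs @ zs) = hd (xs @ [y])"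
  by (cases xs) auto

lemma upc_Cons: "ys \<noteq> [] \<Longrightarrow> upc (a # ys) \<longleftrightarrow> ch a (hd ys) \<and> upc ys"
  by (cases ys) auto

lemma single:
  "Gamma_i X i g \<Longrightarrow> \<exists>L R. upc (L @ [g]) \<and> upc (R @ [g]) \<and> hd (L @ [g]) = GOne \<and> hd (R @ [g]) = GOne
     \<and> set L \<subseteq> Gamma X \<and> set R \<subseteq> Gamma X \<and> rho X (L @ [g]) [g] \<and> rho X (g # rev R) [g]"
proof (induction rule: Gamma_i.induct)
  case g0
  show ?case by (rule exI[of _ "[]"], rule exI[of _ "[]"]) (auto intro: rho_refl simp: GOne_Gamma)
next
  case (g1 x)
  have gx: "GX x \<in> Gamma X" using Gi_Gamma[OF Gamma_i.g1[OF g1]] .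
  show ?case
    by (rule exI[of _ "[GOne]"], rule exI[of _ "[GOne]"])
       (auto simp: ch_def GOne_Gamma intro: rho.gen1[OF gx] rho.gen2[OF gx])
next
  case (gT i a c b)
  have gi: "Gamma_i X (Suc (Suc i)) (GT a c b)" using gT.hyps by (rule Gamma_i.gT)
  note f = GT_facts[OF gi]
  obtain Lc Rc where c: "upc (Lc @ [c])" "upc (Rc @ [c])" "hd (Lc @ [c]) = GOne" "hd (Rc @ [c]) = GOne"
     "set Lc \<subseteq> Gamma X" "set Rc \<subseteq> Gamma X" "rho X (Lc @ [c]) [c]" "rho X (c # rev Rc) [c]"
    using gT.IH(2) by blast
  have na: "a \<noteq> GOne" "b \<noteq> GOne" using Gi_Suc_not_one gT.hyps by blast+
  let ?g = "GT a c b"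
  have u1: "upc ((Lc @ [c, a]) @ [?g])"
    using c(1) upc_append[of Lc c "[a, ?g]"] gT.hyps na by (auto simp: ch_def)
  have u2: "upc ((Rc @ [c, b]) @ [?g])"
    using c(2) upc_append[of Rc c "[b, ?g]"] gT.hyps na by (auto simp: ch_def)
  have h1: "hd ((Lc @ [c, a]) @ [?g]) = GOne" using c(3) by (cases Lc) auto
  have h2: "hd ((Rc @ [c, b]) @ [?g]) = GOne" using c(4) by (cases Rc) auto
  have r1: "rho X ((Lc @ [c, a]) @ [?g]) [?g]"
  proof -
    have "rho X ([] @ (Lc @ [c]) @ [a, ?g]) ([] @ [c] @ [a, ?g])"
      by (rule rho.ctx[OF c(7)]) (use f in auto)
    moreover have "rho X [c, a, ?g] [?g]" using rho.gen4[OF gi] by simp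
    ultimately show ?thesis by (auto intro: rho.trans)
  qed
  have r2: "rho X (?g # rev (Rc @ [c, b])) [?g]"
  proof -
    have "rho X ([?g, b] @ (c # rev Rc) @ []) ([?g, b] @ [c] @ [])"
      by (rule rho.ctx[OF c(8)]) (use f in auto)
    moreover have "rho X [?g, b, c] [?g]" using rho.gen5[OF gi] by simp
    ultimately show ?thesis by (auto intro: rho.trans)
  qed
  show ?case
    by (rule exI[of _ "Lc @ [c, a]"], rule exI[of _ "Rc @ [c, b]"])
       (use u1 u2 h1 h2 r1 r2 c(5,6) f in auto)
qed

lemma collapse:
  "upc (xs @ [p]) \<Longrightarrow> set (xs @ [p]) \<subseteq> Gamma X \<Longrightarrow> rho X (p # rev xs @ xs @ [p]) [p]"
proof (induction xs arbitrary: p rule: rev_induct)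
  case Nil
  then show ?case using rho.gen3[of p X] by simp
next
  case (snoc q xs)
  have u: "upc (xs @ [q])" "ch q p"
    using snoc.prems(1) upc_append[of xs q "[p]"] by auto
  have ih: "rho X (q # rev xs @ xs @ [q]) [q]" using snoc.IH[OF u(1)] snoc.prems(2) by auto
  have "rho X ([p] @ (q # rev xs @ xs @ [q]) @ [p]) ([p] @ [q] @ [p])"
    by (rule rho.ctx[OF ih]) (use snoc.prems(2) in auto)
  moreover have "rho X [p, q, p] [p]" using M3[OF _ u(2)] snoc.prems(2) by auto
  ultimately show ?case by (auto intro: rho.trans)
qed

lemma mountain_inverse:
  assumes "upc (L @ [p])" "upc (R @ [p])" "set (L @ p # R) \<subseteq> Gamma X" "w = L @ p # rev R"
  shows "rho X (w @ rev w @ w) w \<and> rho X (rev w @ w @ rev w) (rev w)"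
proof -
  have cL: "rho X (p # rev L @ L @ [p]) [p]" using collapse[OF assms(1)] assms(3) by auto
  have cR: "rho X (p # rev R @ R @ [p]) [p]" using collapse[OF assms(2)] assms(3) by auto
  have s: "set L \<subseteq> Gamma X" "set R \<subseteq> Gamma X" "p \<in> Gamma X" using assms(3) by auto
  have a1: "rho X (w @ rev w @ w) (L @ [p] @ rev L @ L @ p # rev R)"
    by (rule rho_ctx[OF cR, where p=L and q="rev L @ L @ p # rev R"]) (use s assms(4) in auto)
  have a2: "rho X (L @ [p] @ rev L @ L @ p # rev R) w"
    by (rule rho_ctx[OF cL, where p=L and q="rev R"]) (use s assms(4) in auto)
  have b1: "rho X (rev w @ w @ rev w) (R @ [p] @ rev R @ R @ p # rev L)"
    by (rule rho_ctx[OF cL, where p=R and q="rev R @ R @ p # rev L"]) (use s assms(4) in auto)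
  have b2: "rho X (R @ [p] @ rev R @ R @ p # rev L) (rev w)"
    by (rule rho_ctx[OF cR, where p=R and q="rev L"]) (use s assms(4) in auto)
  show ?thesis using a1 a2 b1 b2 by (auto intro: rho.trans)
qed

lemma valleyA:
  "upc [m, a] \<Longrightarrow> upc (m # R) \<Longrightarrow> set (a # m # R) \<subseteq> Gamma X \<Longrightarrow>
   \<exists>L' p R'. upc (L' @ [p]) \<and> upc (R' @ [p]) \<and> set (L' @ p # R') \<subseteq> Gamma X \<and>
     rho X (a # m # R) (L' @ p # rev R') \<and> hd (L' @ [p]) = a \<and> hd (R' @ [p]) = last (m # R)"
proof (induction R arbitrary: a m)
  case Nil
  show ?case
    by (rule exI[of _ "[]"], rule exI[of _ a], rule exI[of _ "[m]"])
       (use Nil in \<open>auto intro: rho_refl\<close>)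
next
  case (Cons r R)
  have cma: "ch m a" and cmr: "ch m r" and ur: "upc (r # R)" using Cons.prems by auto
  have sG: "a \<in> Gamma X" "m \<in> Gamma X" "r \<in> Gamma X" "set R \<subseteq> Gamma X" using Cons.prems by auto
  show ?case
  proof (cases "a = r")
    case True
    have "rho X ([a, m, a] @ R) ([a] @ R)"
      by (rule rho_ctx[OF M3[OF sG(1) cma], where p="[]" and q=R]) (use sG in auto)
    then have rr: "rho X (a # m # r # R) (a # R)"
      using True by simp
    have eqb: "butlast (a # R) @ [last (a # R)] = a # R" by (rule append_butlast_last_id) simp
    have "upc (butlast (a # R) @ [last (a # R)])" using eqb ur True by simp
    moreover have "upc ([] @ [last (a # R)])" by simp
    moreover have "set (butlast (a # R) @ last (a # R) # []) \<subseteq> Gamma X"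
      using eqb sG by (metis append_Cons append_Nil2 Cons_eq_appendI set_ConsD subsetI insert_subset list.simps(15) True)
    moreover have "rho X (a # m # R') (butlast (a # R) @ last (a # R) # rev [])" if "R' = r # R" for R'
      using rr eqb that by simp
    moreover have "hd (butlast (a # R) @ [last (a # R)]) = a" using eqb by simp
    moreover have "hd ([] @ [last (a # R)]) = last (m # r # R)" using True by simp
    ultimately show ?thesis by blast
  next
    case False
    obtain i where mi: "Gamma_i X i m" using sG(2) unfolding Gamma_def by auto
    have ai: "Gamma_i X (Suc i) a" by (rule ch_level[OF cma mi sG(1)])
    have ri: "Gamma_i X (Suc i) r" by (rule ch_level[OF cmr mi sG(3)])
    have Gi: "Gamma_i X (Suc (Suc i)) (GT r m a)"
      by (rule Gamma_i.gT[OF ri mi ai]) (use False cma cmr in \<open>auto simp: ch_def\<close>)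
    let ?G = "GT r m a"
    have GG: "?G \<in> Gamma X" by (rule Gi_Gamma[OF Gi])
    have s1: "rho X ([a, m, r] @ R) ([a, ?G, r] @ R)"
      by (rule rho_ctx[OF M2[OF Gi], where p="[]" and q=R]) (use sG in auto)
    have u1: "upc [r, ?G]" by (simp add: ch_def)
    obtain L1 p1 R1 where ih: "upc (L1 @ [p1])" "upc (R1 @ [p1])" "set (L1 @ p1 # R1) \<subseteq> Gamma X"
       "rho X (?G # r # R) (L1 @ p1 # rev R1)" "hd (L1 @ [p1]) = ?G" "hd (R1 @ [p1]) = last (r # R)"
      using Cons.IH[OF u1 ur] sG GG by auto
    have s2: "rho X ([a] @ (?G # r # R) @ []) ([a] @ (L1 @ p1 # rev R1) @ [])"
      by (rule rho.ctx[OF ih(4)]) (use sG in auto)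
    have u2: "upc ((a # L1) @ [p1])"
      using ih(1,5) upc_Cons[of "L1 @ [p1]" a] by (auto simp: ch_def)
    have h2: "hd ((a # L1) @ [p1]) = a" by simp
    show ?thesis
      by (rule exI[of _ "a # L1"], rule exI[of _ p1], rule exI[of _ R1])
         (use s1 s2 u2 ih sG in \<open>auto intro: rho.trans\<close>)
  qed
qed

lemma valleyB:
  "upc (m # L) \<Longrightarrow> upc (m # R) \<Longrightarrow> set (rev L @ m # R) \<subseteq> Gamma X \<Longrightarrow>
   \<exists>L' p R'. upc (L' @ [p]) \<and> upc (R' @ [p]) \<and> set (L' @ p # R') \<subseteq> Gamma X \<and>
     rho X (rev L @ m # R) (L' @ p # rev R') \<and> hd (L' @ [p]) = last (m # L) \<and> hd (R' @ [p]) = last (m # R)"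
proof (induction L arbitrary: m R)
  case Nil
  have eqb: "butlast (m # R) @ [last (m # R)] = m # R" by (rule append_butlast_last_id) simp
  have "upc (butlast (m # R) @ [last (m # R)])" using eqb Nil by simp
  moreover have "upc ([] @ [last (m # R)])" by simp
  moreover have "set (butlast (m # R) @ last (m # R) # []) \<subseteq> Gamma X"
    using eqb Nil by simp
  moreover have "rho X (rev [] @ m # R) (butlast (m # R) @ last (m # R) # rev [])"
    using eqb Nil by (auto intro!: rho_refl)
  moreover have "hd (butlast (m # R) @ [last (m # R)]) = last (m # [])" using eqb by simp
  moreover have "hd ([] @ [last (m # R)]) = last (m # R)" by simp
  ultimately show ?case by blast
next
  case (Cons a L0)
  have cma: "upc [m, a]" and ua: "upc (a # L0)" using Cons.prems by auto
  have sG: "a \<in> Gamma X" "m \<in> Gamma X" "set L0 \<subseteq> Gamma X" "set R \<subseteq> Gamma X" using Cons.prems by auto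
  have sA: "set (a # m # R) \<subseteq> Gamma X" using sG by auto
  obtain La pa Ra where A: "upc (La @ [pa])" "upc (Ra @ [pa])" "set (La @ pa # Ra) \<subseteq> Gamma X"
     "rho X (a # m # R) (La @ pa # rev Ra)" "hd (La @ [pa]) = a" "hd (Ra @ [pa]) = last (m # R)"
    using valleyA[OF cma Cons.prems(2) sA] by blast
  define Rn where "Rn = tl (La @ [pa])"
  have LaRn: "La @ [pa] = a # Rn" unfolding Rn_def using A(5) by (metis list.collapse snoc_eq_iff_butlast)
  have uRn: "upc (a # Rn)" using A(1) LaRn by simp
  have "set (La @ [pa]) \<subseteq> Gamma X" using A(3) by auto
  then have sRn: "set Rn \<subseteq> Gamma X" unfolding LaRn by simp
  have sB: "set (rev L0 @ a # Rn) \<subseteq> Gamma X" using sRn sG by auto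
  obtain L2 p2 R2 where B: "upc (L2 @ [p2])" "upc (R2 @ [p2])" "set (L2 @ p2 # R2) \<subseteq> Gamma X"
     "rho X (rev L0 @ a # Rn) (L2 @ p2 # rev R2)" "hd (L2 @ [p2]) = last (a # L0)" "hd (R2 @ [p2]) = last (a # Rn)"
    using Cons.IH[OF ua uRn sB] by blast
  have lastRn: "last (a # Rn) = pa" using LaRn by (metis last_snoc)
  have s1: "rho X (rev L0 @ (a # m # R) @ []) (rev L0 @ (La @ pa # rev Ra) @ [])"
    by (rule rho.ctx[OF A(4)]) (use sG in auto)
  have eq1: "rev L0 @ (La @ pa # rev Ra) = (rev L0 @ a # Rn) @ rev Ra" using LaRn
    by (metis append.assoc append_Cons append_Nil)
  have s2: "rho X ([] @ (rev L0 @ a # Rn) @ rev Ra) ([] @ (L2 @ p2 # rev R2) @ rev Ra)"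
    by (rule rho.ctx[OF B(4)]) (use A(3) in auto)
  have u2: "upc ((Ra @ R2) @ [p2])"
    using upc_glue[OF A(2) B(2)] B(6) lastRn by simp
  have h2: "hd ((Ra @ R2) @ [p2]) = last (m # R)"
    using hd_glue[of "R2 @ [p2]" pa Ra] B(6) lastRn A(6) by simp
  have r: "rho X (rev (a # L0) @ m # R) (L2 @ p2 # rev (Ra @ R2))"
    using s1 s2 eq1 by (auto intro: rho.trans)
  show ?case
    by (rule exI[of _ L2], rule exI[of _ p2], rule exI[of _ "Ra @ R2"])
       (use u2 h2 r B A in auto)
qed

lemma single_mountain:
  assumes g: "g \<in> Gamma X"
  shows "\<exists>L R. upc (L @ [g]) \<and> upc (R @ [g]) \<and> hd (L @ [g]) = GOne \<and> hd (R @ [g]) = GOne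
     \<and> set (L @ g # R) \<subseteq> Gamma X \<and> rho X [g] (L @ g # rev R)"
proof -
  obtain i where "Gamma_i X i g" using g unfolding Gamma_def by auto
  then obtain L R where c: "upc (L @ [g])" "upc (R @ [g])" "hd (L @ [g]) = GOne" "hd (R @ [g]) = GOne"
     "set L \<subseteq> Gamma X" "set R \<subseteq> Gamma X" "rho X (L @ [g]) [g]" "rho X (g # rev R) [g]"
    using single by blast
  have "rho X ([] @ (L @ [g]) @ rev R) ([] @ [g] @ rev R)"
    by (rule rho.ctx[OF c(7)]) (use c in auto)
  then have "rho X (L @ g # rev R) [g]" using c(8) by (auto intro: rho.trans)
  then have "rho X [g] (L @ g # rev R)" by (rule rho.sym)
  then show ?thesis using c g by auto
qed

lemma words_mountain:
  "u \<in> words X \<Longrightarrow> \<exists>L p R. upc (L @ [p]) \<and> upc (R @ [p]) \<and> hd (L @ [p]) = GOne \<and> hd (R @ [p]) = GOne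
     \<and> set (L @ p # R) \<subseteq> Gamma X \<and> rho X u (L @ p # rev R)"
proof (induction u)
  case Nil then show ?case by (simp add: words_def)
next
  case (Cons g u)
  have g: "g \<in> Gamma X" using Cons.prems by (simp add: words_def)
  obtain L1 R1 where c1: "upc (L1 @ [g])" "upc (R1 @ [g])" "hd (L1 @ [g]) = GOne" "hd (R1 @ [g]) = GOne"
     "set (L1 @ g # R1) \<subseteq> Gamma X" "rho X [g] (L1 @ g # rev R1)"
    using single_mountain[OF g] by blast
  show ?case
  proof (cases "u = []")
    case True then show ?thesis using c1 by blast
  next
    case False
    then have uw: "u \<in> words X" using Cons.prems by (simp add: words_def)
    obtain L2 p2 R2 where c2: "upc (L2 @ [p2])" "upc (R2 @ [p2])" "hd (L2 @ [p2]) = GOne" "hd (R2 @ [p2]) = GOne"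
       "set (L2 @ p2 # R2) \<subseteq> Gamma X" "rho X u (L2 @ p2 # rev R2)"
      using Cons.IH[OF uw] by blast
    define T1 where "T1 = tl (R1 @ [g])"
    define T2 where "T2 = tl (L2 @ [p2])"
    have e1: "R1 @ [g] = GOne # T1" unfolding T1_def using c1(4) by (metis list.collapse snoc_eq_iff_butlast)
    have e2: "L2 @ [p2] = GOne # T2" unfolding T2_def using c2(3) by (metis list.collapse snoc_eq_iff_butlast)
    have s1: "set (R1 @ [g]) \<subseteq> Gamma X" using c1(5) by auto
    have s2: "set (L2 @ [p2]) \<subseteq> Gamma X" using c2(5) by auto
    have sT1: "set T1 \<subseteq> Gamma X" using s1 unfolding e1 by simp
    have sT2: "set T2 \<subseteq> Gamma X" using s2 unfolding e2 by simp
    have sL1: "set L1 \<subseteq> Gamma X" and sR2: "set R2 \<subseteq> Gamma X" using c1(5) c2(5) by auto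
    have M1: "L1 @ g # rev R1 = L1 @ rev T1 @ [GOne]"
      using arg_cong[OF e1, of rev] by simp
    have M2: "L2 @ p2 # rev R2 = GOne # T2 @ rev R2"
      using e2 by (metis append_Cons append_assoc append_Nil)
    have r1: "rho X (g # u) ((L1 @ rev T1) @ [GOne, GOne] @ (T2 @ rev R2))"
      using rho_app[OF c1(6) c2(6)] M1 M2 by simp
    have r2: "rho X ((L1 @ rev T1) @ [GOne, GOne] @ (T2 @ rev R2)) ((L1 @ rev T1) @ [GOne] @ (T2 @ rev R2))"
      by (rule rho.ctx[OF rho.gen3[OF GOne_Gamma]]) (use sL1 sT1 sT2 sR2 in auto)
    have uT1: "upc (GOne # T1)" using c1(2) e1 by simp
    have uT2: "upc (GOne # T2)" using c2(1) e2 by simp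
    have sV: "set (rev T1 @ GOne # T2) \<subseteq> Gamma X" using sT1 sT2 GOne_Gamma by auto
    obtain L' p R' where V: "upc (L' @ [p])" "upc (R' @ [p])" "set (L' @ p # R') \<subseteq> Gamma X"
       "rho X (rev T1 @ GOne # T2) (L' @ p # rev R')" "hd (L' @ [p]) = last (GOne # T1)" "hd (R' @ [p]) = last (GOne # T2)"
      using valleyB[OF uT1 uT2 sV] by blast
    have lT1: "last (GOne # T1) = g" using e1 by (metis last_snoc)
    have lT2: "last (GOne # T2) = p2" using e2 by (metis last_snoc)
    have r3: "rho X (L1 @ (rev T1 @ GOne # T2) @ rev R2) (L1 @ (L' @ p # rev R') @ rev R2)"
      by (rule rho.ctx[OF V(4)]) (use sL1 sR2 in auto)
    have r12: "rho X (g # u) (L1 @ (rev T1 @ GOne # T2) @ rev R2)"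
      using rho.trans[OF r1 r2] by simp
    have r: "rho X (g # u) ((L1 @ L') @ p # rev (R2 @ R'))"
      using rho.trans[OF r12 r3] by simp
    have u1: "upc ((L1 @ L') @ [p])" using upc_glue[OF c1(1) V(1)] V(5) lT1 by simp
    have u2: "upc ((R2 @ R') @ [p])" using upc_glue[OF c2(2) V(2)] V(6) lT2 by simp
    have h1: "hd ((L1 @ L') @ [p]) = GOne" using hd_glue[of "L' @ [p]" g L1] V(5) lT1 c1(3) by simp
    have h2: "hd ((R2 @ R') @ [p]) = GOne" using hd_glue[of "R' @ [p]" p2 R2] V(6) lT2 c2(4) by simp
    have ss: "set ((L1 @ L') @ p # (R2 @ R')) \<subseteq> Gamma X" using sL1 sR2 V(3) by auto
    show ?thesis using u1 u2 h1 h2 ss r by blast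
  qed
qed

lemma class_eq: "rho X u v \<Longrightarrow> rho_class X u = rho_class X v"
  unfolding rho_class_def by (auto intro: rho.trans rho.sym)

lemma mult_class:
  assumes "u \<in> words X" "v \<in> words X"
  shows "rho_class X u \<otimes>\<^bsub>FT1 X\<^esub> rho_class X v = rho_class X (u @ v)"
proof -
  have "{w. \<exists>u'\<in>rho_class X u. \<exists>v'\<in>rho_class X v. rho X (u' @ v') w} = rho_class X (u @ v)"
  proof
    show "{w. \<exists>u'\<in>rho_class X u. \<exists>v'\<in>rho_class X v. rho X (u' @ v') w} \<subseteq> rho_class X (u @ v)"
      unfolding rho_class_def by (auto intro: rho.trans rho_app)
    show "rho_class X (u @ v) \<subseteq> {w. \<exists>u'\<in>rho_class X u. \<exists>v'\<in>rho_class X v. rho X (u' @ v') w}"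
      unfolding rho_class_def using assms by (auto intro: rho.refl)
  qed
  then show ?thesis by (simp add: FT1_def)
qed

lemma FT1_carrier: "carrier (FT1 X) = rho_class X ` words X"
  by (simp add: FT1_def)

lemma FT1_one: "\<one>\<^bsub>FT1 X\<^esub> = rho_class X [GOne]"
  by (simp add: FT1_def)

lemma one_words: "[GOne] \<in> words X"
  by (simp add: words_def GOne_Gamma)

lemma app_words: "u \<in> words X \<Longrightarrow> v \<in> words X \<Longrightarrow> u @ v \<in> words X"
  by (simp add: words_def)

lemma rho_one_left: "u \<in> words X \<Longrightarrow> rho X (GOne # u) u"
proof -
  assume u: "u \<in> words X"
  then obtain g u' where "u = g # u'" by (cases u) (auto simp: words_def)
  then show ?thesis using u rho.ctx[OF rho.gen1[of g X], of "[]" u'] by (auto simp: words_def)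
qed

lemma rho_one_right: "u \<in> words X \<Longrightarrow> rho X (u @ [GOne]) u"
proof -
  assume u: "u \<in> words X"
  then obtain g u' where "u = u' @ [g]" by (cases u rule: rev_cases) (auto simp: words_def)
  then show ?thesis using u rho.ctx[OF rho.gen2[of g X], of u' "[]"] by (auto simp: words_def)
qed

lemma FT1_monoid: "monoid (FT1 X)"
proof (rule monoidI)
  fix x y assume "x \<in> carrier (FT1 X)" "y \<in> carrier (FT1 X)"
  then obtain u v where "u \<in> words X" "v \<in> words X" "x = rho_class X u" "y = rho_class X v"
    by (auto simp: FT1_carrier)
  then show "x \<otimes>\<^bsub>FT1 X\<^esub> y \<in> carrier (FT1 X)"
    by (simp add: mult_class FT1_carrier app_words)
next
  show "\<one>\<^bsub>FT1 X\<^esub> \<in> carrier (FT1 X)" by (simp add: FT1_carrier FT1_one one_words)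
next
  fix x y z assume "x \<in> carrier (FT1 X)" "y \<in> carrier (FT1 X)" "z \<in> carrier (FT1 X)"
  then obtain u v w where "u \<in> words X" "v \<in> words X" "w \<in> words X"
     "x = rho_class X u" "y = rho_class X v" "z = rho_class X w"
    by (auto simp: FT1_carrier)
  then show "x \<otimes>\<^bsub>FT1 X\<^esub> y \<otimes>\<^bsub>FT1 X\<^esub> z = x \<otimes>\<^bsub>FT1 X\<^esub> (y \<otimes>\<^bsub>FT1 X\<^esub> z)"
    by (simp add: mult_class app_words)
next
  fix x assume "x \<in> carrier (FT1 X)"
  then obtain u where u: "u \<in> words X" "x = rho_class X u" by (auto simp: FT1_carrier)
  then show "\<one>\<^bsub>FT1 X\<^esub> \<otimes>\<^bsub>FT1 X\<^esub> x = x"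
    using class_eq[OF rho_one_left[OF u(1)]] by (simp add: FT1_one mult_class one_words)
  show "x \<otimes>\<^bsub>FT1 X\<^esub> \<one>\<^bsub>FT1 X\<^esub> = x"
    using u class_eq[OF rho_one_right[OF u(1)]] by (simp add: FT1_one mult_class one_words)
qed

lemma foldr_class:
  "set u \<subseteq> Gamma X \<Longrightarrow>
   foldr (\<lambda>e acc. e \<otimes>\<^bsub>FT1 X\<^esub> acc) (map (\<lambda>g. rho_class X [g]) u) \<one>\<^bsub>FT1 X\<^esub> = rho_class X (u @ [GOne])"
proof (induction u)
  case Nil then show ?case by (simp add: FT1_one)
next
  case (Cons g u)
  have "[g] \<in> words X" "u @ [GOne] \<in> words X" using Cons.prems GOne_Gamma by (auto simp: words_def)
  then show ?case using Cons by (simp add: mult_class)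
qed

lemma regular: "regular_monoid (FT1 X)"
  unfolding regular_monoid_def
proof (intro conjI ballI)
  show "monoid (FT1 X)" by (rule FT1_monoid)
  fix a assume "a \<in> carrier (FT1 X)"
  then obtain u where u: "u \<in> words X" "a = rho_class X u" by (auto simp: FT1_carrier)
  obtain L p R where m: "upc (L @ [p])" "upc (R @ [p])" "set (L @ p # R) \<subseteq> Gamma X" "rho X u (L @ p # rev R)"
    using words_mountain[OF u(1)] by blast
  define w where "w = L @ p # rev R"
  have inv: "rho X (w @ rev w @ w) w" using mountain_inverse[OF m(1-3) w_def] by blast
  have ww: "w \<in> words X" "rev w \<in> words X" using m(3) by (auto simp: words_def w_def)
  have uw: "rho X u w" using m(4) w_def by simp
  have "a \<otimes>\<^bsub>FT1 X\<^esub> rho_class X (rev w) \<otimes>\<^bsub>FT1 X\<^esub> a = rho_class X ((u @ rev w) @ u)"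
    using u ww by (simp add: mult_class app_words)
  also have "\<dots> = rho_class X ((w @ rev w) @ w)"
    by (rule class_eq, rule rho_app[OF rho_app[OF uw] uw], rule rho.refl, rule ww(2))
  also have "\<dots> = rho_class X u" using class_eq[OF inv] class_eq[OF uw] by simp
  finally show "\<exists>b\<in>carrier (FT1 X). a \<otimes>\<^bsub>FT1 X\<^esub> b \<otimes>\<^bsub>FT1 X\<^esub> a = a"
    using ww(2) u(2) by (auto simp: FT1_carrier)
qed

lemma idem_gen: "idempotent_generated (FT1 X)"
  unfolding idempotent_generated_def
proof (intro ballI)
  fix a assume "a \<in> carrier (FT1 X)"
  then obtain u where u: "u \<in> words X" "a = rho_class X u" by (auto simp: FT1_carrier)
  have su: "set u \<subseteq> Gamma X" using u by (simp add: words_def)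
  let ?es = "map (\<lambda>g. rho_class X [g]) u"
  have "set ?es \<subseteq> {e \<in> carrier (FT1 X). e \<otimes>\<^bsub>FT1 X\<^esub> e = e}"
  proof
    fix e assume "e \<in> set ?es"
    then obtain g where g: "g \<in> set u" "e = rho_class X [g]" by auto
    have gw: "[g] \<in> words X" using g su by (auto simp: words_def)
    have "e \<otimes>\<^bsub>FT1 X\<^esub> e = e" using g gw class_eq[OF rho.gen3[of g X]] su
      by (auto simp: mult_class)
    then show "e \<in> {e \<in> carrier (FT1 X). e \<otimes>\<^bsub>FT1 X\<^esub> e = e}"
      using gw g by (auto simp: FT1_carrier)
  qed
  moreover have "a = foldr (\<lambda>e acc. e \<otimes>\<^bsub>FT1 X\<^esub> acc) ?es \<one>\<^bsub>FT1 X\<^esub>"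
    using foldr_class[OF su] class_eq[OF rho_one_right[OF u(1)]] u(2) by simp
  ultimately show "\<exists>es. set es \<subseteq> {e \<in> carrier (FT1 X). e \<otimes>\<^bsub>FT1 X\<^esub> e = e} \<and>
      a = foldr (\<lambda>e acc. e \<otimes>\<^bsub>FT1 X\<^esub> acc) es \<one>\<^bsub>FT1 X\<^esub>" by blast
qed

lemma peak_inverse:
  assumes len: "length gs = Suc n" and sg: "set gs \<subseteq> Gamma X" and kn: "k < n"
    and up: "\<forall>j. 1 \<le> j \<and> j \<le> k \<longrightarrow> gs ! j \<noteq> GOne \<and> gs ! (j - 1) \<in> {gl (gs ! j), gr (gs ! j)}"
    and dn: "\<forall>j. k < j \<and> j \<le> n \<longrightarrow> gs ! (j - 1) \<noteq> GOne \<and> gs ! j \<in> {gl (gs ! (j - 1)), gr (gs ! (j - 1))}"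
  shows "is_inverse (FT1 X) (rho_class X gs) (rho_class X (rev gs))"
proof -
  define L where "L = take k gs"
  define p where "p = gs ! k"
  define R where "R = rev (drop (Suc k) gs)"
  have gs_eq: "gs = L @ p # rev R"
    unfolding L_def p_def R_def using kn len by (simp add: id_take_nth_drop)
  have "upc (take (Suc k) gs)"
    unfolding upc_nth
  proof (intro allI impI)
    fix j assume j: "0 < j \<and> j < length (take (Suc k) gs)"
    then have "j \<le> k" "1 \<le> j" using len kn by auto
    then show "ch (take (Suc k) gs ! (j - 1)) (take (Suc k) gs ! j)"
      using up j by (auto simp: ch_def)
  qed
  moreover have "take (Suc k) gs = L @ [p]" unfolding L_def p_def using kn len by (simp add: take_Suc_conv_app_nth)
  ultimately have uL: "upc (L @ [p])" by simp
  have "upc (rev (drop k gs))"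
    unfolding upc_nth
  proof (intro allI impI)
    fix j assume j: "0 < j \<and> j < length (rev (drop k gs))"
    define t where "t = Suc n - j"
    have lj: "length (drop k gs) = Suc n - k" using len by simp
    have t1: "k < t" "t \<le> n" using j lj kn unfolding t_def by auto
    have e1: "rev (drop k gs) ! (j - 1) = gs ! t"
    proof -
      have "j - 1 < length (drop k gs)" using j by (simp add: less_imp_diff_less)
      then have "rev (drop k gs) ! (j - 1) = drop k gs ! (length (drop k gs) - Suc (j - 1))"
        by (rule rev_nth)
      then have "rev (drop k gs) ! (j - 1) = drop k gs ! (Suc n - k - Suc (j - 1))"
        using lj len by simp
      also have "\<dots> = gs ! (k + (Suc n - k - Suc (j - 1)))" using len kn by (simp add: nth_drop)
      also have "k + (Suc n - k - Suc (j - 1)) = t" using j lj kn unfolding t_def by auto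
      finally show ?thesis .
    qed
    have e2: "rev (drop k gs) ! j = gs ! (t - 1)"
    proof -
      have "j < length (drop k gs)" using j by simp
      then have "rev (drop k gs) ! j = drop k gs ! (length (drop k gs) - Suc j)"
        by (rule rev_nth)
      then have "rev (drop k gs) ! j = drop k gs ! (Suc n - k - Suc j)"
        using lj len by simp
      also have "\<dots> = gs ! (k + (Suc n - k - Suc j))" using len kn by (simp add: nth_drop)
      also have "k + (Suc n - k - Suc j) = t - 1" using j lj kn unfolding t_def by auto
      finally show ?thesis .
    qed
    show "ch (rev (drop k gs) ! (j - 1)) (rev (drop k gs) ! j)"
      using dn t1 e1 e2 by (auto simp: ch_def)
  qed
  moreover have "rev (drop k gs) = R @ [p]"
  proof -
    have "drop k gs = gs ! k # drop (Suc k) gs" using kn len by (simp add: Cons_nth_drop_Suc)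
    then show ?thesis unfolding R_def p_def by simp
  qed
  ultimately have uR: "upc (R @ [p])" by simp
  have sLR: "set (L @ p # R) \<subseteq> Gamma X" using sg gs_eq by auto
  have inv: "rho X (gs @ rev gs @ gs) gs \<and> rho X (rev gs @ gs @ rev gs) (rev gs)"
    by (rule mountain_inverse[OF uL uR sLR gs_eq])
  have w: "gs \<in> words X" "rev gs \<in> words X" using len sg by (auto simp: words_def)
  show ?thesis unfolding is_inverse_def
    using inv w class_eq[of X "gs @ rev gs @ gs" gs] class_eq[of X "rev gs @ gs @ rev gs" "rev gs"]
    by (simp add: mult_class app_words)
qed

theorem proposition3p6:
  fixes X :: "'a set"
  assumes "X \<noteq> {}"
  shows "regular_monoid (FT1 X) \<and> idempotent_generated (FT1 X) \<and>
    (\<forall>gs n k. length gs = Suc n \<and> set gs \<subseteq> Gamma X \<and> 0 < k \<and> k < n \<and>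
       (\<forall>j. 1 \<le> j \<and> j \<le> k \<longrightarrow> gs ! j \<noteq> GOne \<and> gs ! (j - 1) \<in> {gl (gs ! j), gr (gs ! j)}) \<and>
       (\<forall>j. k < j \<and> j \<le> n \<longrightarrow> gs ! (j - 1) \<noteq> GOne \<and> gs ! j \<in> {gl (gs ! (j - 1)), gr (gs ! (j - 1))})
     \<longrightarrow> is_inverse (FT1 X) (rho_class X gs) (rho_class X (rev gs)))"
  using regular idem_gen peak_inverse by blast

end
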